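(* Let $\mathcal B$ be a finite set of finite Cornish algebras of type $F=F^+\,\dot\cup\,F^-$ and let $\mathcal Y=\{D(\mathbf A)\mid\mathbf A\in\mathcal B\}$. Then the algebras in $\mathcal B$ are semi-primal and share a common ternary discriminator term provided: (i) each $\mathbb X\in\mathcal Y$ has no non-empty proper substructures; (ii) the set $F^-$ is non-empty; (iii) there exists a unary term $t$ in the signature $F$ such that $t^{\mathbb X}$ is constant for all $\mathbb X\in\mathcal Y$.
   Context: A Cornish algebra of type $F$: a bounded distributive lattice with unary operations $f^{\mathbf A}$ ($f\in F$), an endomorphism for $f\in F^+$ and a dual endomorphism for $f\in F^-$. A Cornish space of type $F$: a Priestley space with unary operations $f^{\mathbb X}$, continuous order-preserving for $f\in F^+$ and continuous order-reversing for $f\in F^-$. A substructure is a closed subset closed under all $f^{\mathbb X}$. $D(\mathbf A)$: the set of bounded-lattice homomorphisms from the lattice reduct of $\mathbf A$ to $\mathbf 2$, ordered pointwise, topology from $\{0,1\}^A$, with $f^{D(\mathbf A)}(x)=x\circ f^{\mathbf A}$ for $f\in F^+$ and $c\circ x\circ f^{\mathbf A}$ for $f\in F^-$ ($c$ Boolean complement). A unary term is a finite composite of symbols of $F$, interpreted in $\mathbb X$ as the corresponding composite of the maps $f^{\mathbb X}$. Semi-primal: finite algebra with a majority term such that every subalgebra of $\mathbf A^2$ is a product of subalgebras or the graph of the identity on a subalgebra. Sharing a common ternary discriminator term: one ternary term $t$ induces on each algebra the map $\tau(x,y,z)=x$ if $x\ne y$, $=z$ if $x=y$. *)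

theory Defs
  imports "HOL-Analysis.Analysis"
begin

text \<open>A Cornish algebra of type F. The type F is the type 'f of operation symbols,
  split as F = F+ (symbols f with pos f) disjoint-union F- (symbols f with not pos f).\<close>

record ('a, 'f) cornish =
  car :: "'a set"
  jn  :: "'a \<Rightarrow> 'a \<Rightarrow> 'a"
  mt  :: "'a \<Rightarrow> 'a \<Rightarrow> 'a"
  bt  :: "'a"
  tp  :: "'a"
  ops :: "'f \<Rightarrow> 'a \<Rightarrow> 'a"

definition bdl :: "('a, 'f) cornish \<Rightarrow> bool" where
  "bdl A \<longleftrightarrow>
     bt A \<in> car A \<and> tp A \<in> car A \<and>
     (\<forall>a\<in>car A. \<forall>b\<in>car A. jn A a b \<in> car A \<and> mt A a b \<in> car A) \<and>
     (\<forall>a\<in>car A. \<forall>b\<in>car A. \<forall>c\<in>car A.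
        jn A (jn A a b) c = jn A a (jn A b c) \<and> mt A (mt A a b) c = mt A a (mt A b c) \<and>
        mt A a (jn A b c) = jn A (mt A a b) (mt A a c)) \<and>
     (\<forall>a\<in>car A. \<forall>b\<in>car A.
        jn A a b = jn A b a \<and> mt A a b = mt A b a \<and>
        jn A a (mt A a b) = a \<and> mt A a (jn A a b) = a) \<and>
     (\<forall>a\<in>car A. jn A (bt A) a = a \<and> mt A (tp A) a = a)"

definition cornish_algebra :: "('f \<Rightarrow> bool) \<Rightarrow> ('a, 'f) cornish \<Rightarrow> bool" where
  "cornish_algebra pos A \<longleftrightarrow> bdl A \<and>
     (\<forall>f. \<forall>a\<in>car A. ops A f a \<in> car A) \<and>
     (\<forall>f. pos f \<longrightarrow>
        (\<forall>a\<in>car A. \<forall>b\<in>car A. ops A f (jn A a b) = jn A (ops A f a) (ops A f b) \<and>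
                               ops A f (mt A a b) = mt A (ops A f a) (ops A f b)) \<and>
        ops A f (bt A) = bt A \<and> ops A f (tp A) = tp A) \<and>
     (\<forall>f. \<not> pos f \<longrightarrow>
        (\<forall>a\<in>car A. \<forall>b\<in>car A. ops A f (jn A a b) = mt A (ops A f a) (ops A f b) \<and>
                               ops A f (mt A a b) = jn A (ops A f a) (ops A f b)) \<and>
        ops A f (bt A) = tp A \<and> ops A f (tp A) = bt A)"

text \<open>Points of D(A): bounded-lattice homomorphisms from the lattice reduct to 2 = bool
  (False = 0, True = 1), represented as extensional functions on the carrier.\<close>

definition dual_carrier :: "('a, 'f) cornish \<Rightarrow> ('a \<Rightarrow> bool) set" where
  "dual_carrier A = {x \<in> car A \<rightarrow>\<^sub>E (UNIV :: bool set).
      (\<forall>a\<in>car A. \<forall>b\<in>car A. x (jn A a b) = (x a \<or> x b) \<and> x (mt A a b) = (x a \<and> x b)) \<and>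
      x (bt A) = False \<and> x (tp A) = True}"

definition dual_topology :: "('a, 'f) cornish \<Rightarrow> ('a \<Rightarrow> bool) topology" where
  "dual_topology A = subtopology (product_topology (\<lambda>_. discrete_topology (UNIV :: bool set)) (car A))
                                 (dual_carrier A)"

definition dual_op :: "('f \<Rightarrow> bool) \<Rightarrow> ('a, 'f) cornish \<Rightarrow> 'f \<Rightarrow> ('a \<Rightarrow> bool) \<Rightarrow> ('a \<Rightarrow> bool)" where
  "dual_op pos A f x =
     (if pos f then restrict (\<lambda>a. x (ops A f a)) (car A)
      else restrict (\<lambda>a. \<not> x (ops A f a)) (car A))"

definition dual_substructure :: "('f \<Rightarrow> bool) \<Rightarrow> ('a, 'f) cornish \<Rightarrow> ('a \<Rightarrow> bool) set \<Rightarrow> bool" where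
  "dual_substructure pos A S \<longleftrightarrow> S \<subseteq> dual_carrier A \<and> closedin (dual_topology A) S \<and>
     (\<forall>f. \<forall>x\<in>S. dual_op pos A f x \<in> S)"

text \<open>Unary term = finite (nonempty) composite of symbols; [f1,...,fn] is interpreted as
  f1 o ... o fn.\<close>
definition dual_uterm :: "('f \<Rightarrow> bool) \<Rightarrow> ('a, 'f) cornish \<Rightarrow> 'f list \<Rightarrow> ('a \<Rightarrow> bool) \<Rightarrow> ('a \<Rightarrow> bool)" where
  "dual_uterm pos A t = foldr (\<lambda>f g. dual_op pos A f \<circ> g) t id"

datatype ('f, 'v) trm = Var 'v | Join "('f, 'v) trm" "('f, 'v) trm" | Meet "('f, 'v) trm" "('f, 'v) trm"
  | Bot | Top | Op 'f "('f, 'v) trm"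

primrec teval :: "('a, 'f) cornish \<Rightarrow> ('v \<Rightarrow> 'a) \<Rightarrow> ('f, 'v) trm \<Rightarrow> 'a" where
  "teval A \<rho> (Var v) = \<rho> v"
| "teval A \<rho> (Join s t) = jn A (teval A \<rho> s) (teval A \<rho> t)"
| "teval A \<rho> (Meet s t) = mt A (teval A \<rho> s) (teval A \<rho> t)"
| "teval A \<rho> Bot = bt A"
| "teval A \<rho> Top = tp A"
| "teval A \<rho> (Op f s) = ops A f (teval A \<rho> s)"

datatype var3 = V0 | V1 | V2

definition env3 :: "'a \<Rightarrow> 'a \<Rightarrow> 'a \<Rightarrow> var3 \<Rightarrow> 'a" where
  "env3 x y z v = (case v of V0 \<Rightarrow> x | V1 \<Rightarrow> y | V2 \<Rightarrow> z)"

definition is_majority_term :: "('a, 'f) cornish \<Rightarrow> ('f, var3) trm \<Rightarrow> bool" where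
  "is_majority_term A m \<longleftrightarrow> (\<forall>x\<in>car A. \<forall>y\<in>car A.
      teval A (env3 x x y) m = x \<and> teval A (env3 x y x) m = x \<and> teval A (env3 y x x) m = x)"

definition is_discriminator_term :: "('a, 'f) cornish \<Rightarrow> ('f, var3) trm \<Rightarrow> bool" where
  "is_discriminator_term A t \<longleftrightarrow> (\<forall>x\<in>car A. \<forall>y\<in>car A. \<forall>z\<in>car A.
      teval A (env3 x y z) t = (if x \<noteq> y then x else z))"

definition subalg :: "('a, 'f) cornish \<Rightarrow> 'a set \<Rightarrow> bool" where
  "subalg A S \<longleftrightarrow> S \<subseteq> car A \<and> bt A \<in> S \<and> tp A \<in> S \<and>
     (\<forall>a\<in>S. \<forall>b\<in>S. jn A a b \<in> S \<and> mt A a b \<in> S) \<and> (\<forall>f. \<forall>a\<in>S. ops A f a \<in> S)"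

definition subalg2 :: "('a, 'f) cornish \<Rightarrow> ('a \<times> 'a) set \<Rightarrow> bool" where
  "subalg2 A S \<longleftrightarrow> S \<subseteq> car A \<times> car A \<and> (bt A, bt A) \<in> S \<and> (tp A, tp A) \<in> S \<and>
     (\<forall>(a,a')\<in>S. \<forall>(b,b')\<in>S. (jn A a b, jn A a' b') \<in> S \<and> (mt A a b, mt A a' b') \<in> S) \<and>
     (\<forall>f. \<forall>(a,a')\<in>S. (ops A f a, ops A f a') \<in> S)"

definition semi_primal :: "('a, 'f) cornish \<Rightarrow> bool" where
  "semi_primal A \<longleftrightarrow> finite (car A) \<and> (\<exists>m. is_majority_term A m) \<and>
     (\<forall>S. subalg2 A S \<longrightarrow>
        (\<exists>B1 B2. subalg A B1 \<and> subalg A B2 \<and> S = B1 \<times> B2) \<or>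
        (\<exists>B. subalg A B \<and> S = {(b, b) | b. b \<in> B}))"

end

theory Submission
  imports Defs
begin

context fixes A :: "('a,'f) cornish" assumes B: "bdl A" begin

lemma cl: "bt A \<in> car A" "tp A \<in> car A"
  "a \<in> car A \<Longrightarrow> b \<in> car A \<Longrightarrow> jn A a b \<in> car A"
  "a \<in> car A \<Longrightarrow> b \<in> car A \<Longrightarrow> mt A a b \<in> car A"
  using B unfolding bdl_def by blast+

lemma laws:
  assumes "a \<in> car A" "b \<in> car A" "c \<in> car A"
  shows "jn A (jn A a b) c = jn A a (jn A b c)" "mt A (mt A a b) c = mt A a (mt A b c)"
    "mt A a (jn A b c) = jn A (mt A a b) (mt A a c)"
    "jn A a b = jn A b a" "mt A a b = mt A b a"
    "jn A a (mt A a b) = a" "mt A a (jn A a b) = a"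
    "jn A (bt A) a = a" "mt A (tp A) a = a"
  using B assms unfolding bdl_def by blast+

lemma derived:
  assumes a: "a \<in> car A"
  shows "mt A a a = a" "jn A a a = a" "mt A (bt A) a = bt A" "jn A (tp A) a = tp A"
    "mt A a (bt A) = bt A" "jn A a (tp A) = tp A" "jn A a (bt A) = a" "mt A a (tp A) = a"
proof -
  show 1: "mt A a a = a" by (metis a cl(4) laws(6,7))
  show "jn A a a = a" by (metis a cl(3) laws(6,7))
  show 3: "mt A (bt A) a = bt A" by (metis a cl(1) laws(7,8))
  show 4: "jn A (tp A) a = tp A" by (metis a cl(2) laws(6,9))
  show "mt A a (bt A) = bt A" by (metis 3 a cl(1) laws(5))
  show "jn A a (tp A) = tp A" by (metis 4 a cl(2) laws(4))
  show "jn A a (bt A) = a" by (metis a cl(1) laws(4,8))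
  show "mt A a (tp A) = a" by (metis a cl(2) laws(5,9))
qed

definition le where "le x y \<longleftrightarrow> mt A x y = x"

lemma le_trans: "x \<in> car A \<Longrightarrow> y \<in> car A \<Longrightarrow> z \<in> car A \<Longrightarrow> le x y \<Longrightarrow> le y z \<Longrightarrow> le x z"
  unfolding le_def by (metis laws(2))

lemma le_antisym: "x \<in> car A \<Longrightarrow> y \<in> car A \<Longrightarrow> le x y \<Longrightarrow> le y x \<Longrightarrow> x = y"
  unfolding le_def by (metis laws(5))

lemma le_refl: "x \<in> car A \<Longrightarrow> le x x"
  unfolding le_def by (simp add: derived(1))

lemma le_mt: "x \<in> car A \<Longrightarrow> y \<in> car A \<Longrightarrow> z \<in> car A \<Longrightarrow> le x (mt A y z) \<longleftrightarrow> le x y \<and> le x z"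
  unfolding le_def by (metis cl(4) derived(1) laws(2,5))

lemma le_jn1: "x \<in> car A \<Longrightarrow> y \<in> car A \<Longrightarrow> z \<in> car A \<Longrightarrow> le x y \<Longrightarrow> le x (jn A y z)"
  unfolding le_def by (metis cl(4) laws(3,6))

lemma le_jn_lub: "x \<in> car A \<Longrightarrow> y \<in> car A \<Longrightarrow> z \<in> car A \<Longrightarrow> le x z \<Longrightarrow> le y z \<Longrightarrow> le (jn A x y) z"
  unfolding le_def by (metis cl(3) laws(3,5))

lemma le_mt1: "x \<in> car A \<Longrightarrow> y \<in> car A \<Longrightarrow> le (mt A x y) x"
  unfolding le_def by (metis derived(1) laws(2,5))

lemma sep1:
  assumes fin: "finite (car A)" and a: "a \<in> car A" and b: "b \<in> car A" and nab: "\<not> le a b"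
  shows "\<exists>p\<in>dual_carrier A. p a \<and> \<not> p b"
proof -
  define M where "M = {e\<in>car A. le e a \<and> \<not> le e b}"
  define dn where "dn e = card {x\<in>car A. le x e}" for e
  have "a \<in> M" using a nab le_refl unfolding M_def by auto
  then obtain j where jM: "j \<in> M" and jmin: "\<And>e. e \<in> M \<Longrightarrow> dn j \<le> dn e"
    using ex_has_least_nat[of "\<lambda>e. e \<in> M" a dn] by blast
  have j: "j \<in> car A" "le j a" "\<not> le j b" using jM unfolding M_def by auto
  have minl: "e = j" if e: "e \<in> car A" "le e j" "\<not> le e b" for e
  proof (rule ccontr)
    assume ne: "e \<noteq> j"
    have "e \<in> M" using e j le_trans[of e j a] a unfolding M_def by auto
    hence "dn j \<le> dn e" by (rule jmin)
    moreover have "{x\<in>car A. le x e} \<subset> {x\<in>car A. le x j}"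
    proof
      show "{x\<in>car A. le x e} \<subseteq> {x\<in>car A. le x j}" using le_trans[of _ e j] e j by auto
      have "j \<notin> {x\<in>car A. le x e}" using le_antisym[of e j] e j ne by auto
      thus "{x\<in>car A. le x e} \<noteq> {x\<in>car A. le x j}" using le_refl[of j] j by auto
    qed
    hence "dn e < dn j" unfolding dn_def by (rule psubset_card_mono[rotated]) (use fin in auto)
    ultimately show False by simp
  qed
  have prime: "le j u \<or> le j w" if u: "u \<in> car A" and w: "w \<in> car A" and h: "le j (jn A u w)" for u w
  proof (rule ccontr)
    assume "\<not> (le j u \<or> le j w)"
    hence "mt A j u \<noteq> j" "mt A j w \<noteq> j" unfolding le_def by auto
    hence "le (mt A j u) b" "le (mt A j w) b"
      using minl[of "mt A j u"] minl[of "mt A j w"] le_mt1 cl(4) u w j by auto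
    hence "le (jn A (mt A j u) (mt A j w)) b" using le_jn_lub cl(4) u w j b by auto
    moreover have "jn A (mt A j u) (mt A j w) = j" using h laws(3) u w j unfolding le_def by metis
    ultimately show False using j by simp
  qed
  define p where "p = restrict (\<lambda>e. le j e) (car A)"
  have "p \<in> dual_carrier A"
    unfolding dual_carrier_def
  proof (intro CollectI conjI ballI)
    show "p \<in> car A \<rightarrow>\<^sub>E UNIV" unfolding p_def by auto
  next
    fix x y assume x: "x \<in> car A" and y: "y \<in> car A"
    show "p (jn A x y) = (p x \<or> p y)"
      using prime[OF x y] le_jn1[of j x y] le_jn1[of j y x] laws(4)[OF x y] x y j cl(3)[OF x y]
      unfolding p_def by auto
    show "p (mt A x y) = (p x \<and> p y)"
      using le_mt[of j x y] x y j cl(4)[OF x y] unfolding p_def by auto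
  next
    have "\<not> le j (bt A)"
    proof
      assume "le j (bt A)"
      hence "j = bt A" unfolding le_def using derived(5) j by simp
      thus False using j derived(3) b unfolding le_def by simp
    qed
    thus "p (bt A) = False" unfolding p_def using cl by simp
    show "p (tp A) = True" unfolding p_def using cl derived(8) j unfolding le_def by simp
  qed
  moreover have "p a \<and> \<not> p b" using j a b unfolding p_def by simp
  ultimately show ?thesis by blast
qed

lemma sep:
  assumes fin: "finite (car A)" and a: "a \<in> car A" and b: "b \<in> car A" and nab: "a \<noteq> b"
  shows "\<exists>p\<in>dual_carrier A. p a \<noteq> p b"
proof (cases "le a b")
  case True
  hence "\<not> le b a" using le_antisym a b nab by blast
  then show ?thesis using sep1[OF fin b a] by metis
next
  case False
  then show ?thesis using sep1[OF fin a b] by metis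
qed

lemma sep_eq:
  assumes fin: "finite (car A)" and a: "a \<in> car A" and b: "b \<in> car A"
    and h: "\<And>p. p \<in> dual_carrier A \<Longrightarrow> p a = p b"
  shows "a = b"
  using sep[OF fin a b] h by blast

end

lemma ca_bdl: "cornish_algebra pos A \<Longrightarrow> bdl A"
  unfolding cornish_algebra_def by blast

lemma ca_ops: "cornish_algebra pos A \<Longrightarrow> a \<in> car A \<Longrightarrow> ops A f a \<in> car A"
  unfolding cornish_algebra_def by blast

lemma ca_neg: "cornish_algebra pos A \<Longrightarrow> \<not> pos g \<Longrightarrow> ops A g (bt A) = tp A \<and> ops A g (tp A) = bt A"
  unfolding cornish_algebra_def by blast

lemma dual_hom:
  assumes "x \<in> dual_carrier A" "a \<in> car A" "b \<in> car A"
  shows "x (jn A a b) = (x a \<or> x b)" "x (mt A a b) = (x a \<and> x b)" "x (bt A) = False" "x (tp A) = True"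
  using assms unfolding dual_carrier_def by auto

lemma dual_bt: "x \<in> dual_carrier A \<Longrightarrow> x (bt A) = False"
  unfolding dual_carrier_def by auto
lemma dual_tp: "x \<in> dual_carrier A \<Longrightarrow> x (tp A) = True"
  unfolding dual_carrier_def by auto

lemma dual_op_app:
  "a \<in> car A \<Longrightarrow> dual_op pos A f x a = (x (ops A f a) \<noteq> (\<not> pos f))"
  unfolding dual_op_def by auto

lemma dual_op_carrier:
  assumes ca: "cornish_algebra pos A" and x: "x \<in> dual_carrier A"
  shows "dual_op pos A f x \<in> dual_carrier A"
proof -
  have B: "bdl A" using ca by (rule ca_bdl)
  have fc: "\<And>a. a \<in> car A \<Longrightarrow> ops A f a \<in> car A" using ca_ops[OF ca] .
  show ?thesis
  proof (cases "pos f")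
    case True
    hence h: "\<forall>a\<in>car A. \<forall>b\<in>car A. ops A f (jn A a b) = jn A (ops A f a) (ops A f b) \<and>
                               ops A f (mt A a b) = mt A (ops A f a) (ops A f b)"
      "ops A f (bt A) = bt A" "ops A f (tp A) = tp A" using ca unfolding cornish_algebra_def by blast+
    show ?thesis unfolding dual_carrier_def
      using h fc x True cl[OF B] dual_hom[OF x] cl(3,4)[OF B]
      by (auto simp: dual_op_def)
  next
    case False
    hence h: "\<forall>a\<in>car A. \<forall>b\<in>car A. ops A f (jn A a b) = mt A (ops A f a) (ops A f b) \<and>
                               ops A f (mt A a b) = jn A (ops A f a) (ops A f b)"
      "ops A f (bt A) = tp A" "ops A f (tp A) = bt A" using ca unfolding cornish_algebra_def by blast+
    show ?thesis unfolding dual_carrier_def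
      using h fc x False cl[OF B] dual_hom[OF x] cl(3,4)[OF B]
      by (auto simp: dual_op_def)
  qed
qed

lemma dual_uterm_Cons: "dual_uterm pos A (f # w) = dual_op pos A f \<circ> dual_uterm pos A w"
  unfolding dual_uterm_def by simp

lemma dual_uterm_Nil: "dual_uterm pos A [] = id"
  unfolding dual_uterm_def by simp

lemma dual_uterm_append: "dual_uterm pos A (v @ w) = dual_uterm pos A v \<circ> dual_uterm pos A w"
  by (induction v) (auto simp: dual_uterm_Cons dual_uterm_Nil)

lemma dual_uterm_carrier:
  "cornish_algebra pos A \<Longrightarrow> x \<in> dual_carrier A \<Longrightarrow> dual_uterm pos A w x \<in> dual_carrier A"
  by (induction w) (auto simp: dual_uterm_Cons dual_uterm_Nil dual_op_carrier)

lemma dual_finite: "finite (car A) \<Longrightarrow> finite (dual_carrier A)"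
proof -
  assume "finite (car A)"
  hence "finite (car A \<rightarrow>\<^sub>E (UNIV :: bool set))" by (intro finite_PiE) auto
  thus ?thesis by (rule finite_subset[rotated]) (auto simp: dual_carrier_def)
qed

lemma dual_closed:
  assumes "finite S" "S \<subseteq> dual_carrier A"
  shows "closedin (dual_topology A) S"
proof -
  have "Hausdorff_space (product_topology (\<lambda>_. discrete_topology (UNIV :: bool set)) (car A))"
    by (simp add: Hausdorff_space_product_topology)
  hence "t1_space (dual_topology A)" unfolding dual_topology_def
    by (intro t1_space_subtopology Hausdorff_imp_t1_space)
  moreover have "S \<subseteq> topspace (dual_topology A)"
    using assms(2) unfolding dual_topology_def dual_carrier_def by auto
  ultimately show ?thesis using assms(1) t1_space_closedin_finite by blast
qed

fun evw :: "('a,'f) cornish \<Rightarrow> 'f list \<Rightarrow> 'a \<Rightarrow> 'a" where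
  "evw A [] a = a"
| "evw A (f # w) a = evw A w (ops A f a)"

fun par :: "('f \<Rightarrow> bool) \<Rightarrow> 'f list \<Rightarrow> bool" where
  "par pos [] = False"
| "par pos (f # w) = ((\<not> pos f) \<noteq> par pos w)"

fun wt :: "'f list \<Rightarrow> ('f, var3) trm \<Rightarrow> ('f, var3) trm" where
  "wt [] s = s"
| "wt (f # w) s = wt w (Op f s)"

lemma teval_wt: "teval A \<rho> (wt w s) = evw A w (teval A \<rho> s)"
  by (induction w arbitrary: s) auto

lemma evw_car: "cornish_algebra pos A \<Longrightarrow> a \<in> car A \<Longrightarrow> evw A w a \<in> car A"
  by (induction w arbitrary: a) (auto simp: ca_ops)

lemma ev_dual:
  assumes ca: "cornish_algebra pos A" and p: "p \<in> dual_carrier A" and a: "a \<in> car A"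
  shows "p (evw A w a) = (dual_uterm pos A w p a \<noteq> par pos w)"
  using a
proof (induction w arbitrary: a)
  case Nil
  then show ?case by (simp add: dual_uterm_Nil)
next
  case (Cons f w)
  have "p (evw A (f # w) a) = (dual_uterm pos A w p (ops A f a) \<noteq> par pos w)"
    using Cons ca_ops[OF ca] by simp
  also have "dual_uterm pos A w p (ops A f a) = (dual_op pos A f (dual_uterm pos A w p) a \<noteq> (\<not> pos f))"
    using dual_op_app[OF Cons.prems] by auto
  finally show ?case by (auto simp: dual_uterm_Cons)
qed

definition kf :: "('f \<Rightarrow> bool) \<Rightarrow> 'f \<Rightarrow> 'f list \<Rightarrow> ('a,'f) cornish \<Rightarrow> 'f list \<Rightarrow> 'a \<Rightarrow> 'a" where
  "kf pos g t A v a = (if par pos (v @ t) then ops A g (evw A (v @ t) a) else evw A (v @ t) a)"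

definition kt :: "('f \<Rightarrow> bool) \<Rightarrow> 'f \<Rightarrow> 'f list \<Rightarrow> 'f list \<Rightarrow> ('f, var3) trm \<Rightarrow> ('f, var3) trm" where
  "kt pos g t v s = (if par pos (v @ t) then Op g (wt (v @ t) s) else wt (v @ t) s)"

lemma teval_kt: "teval A \<rho> (kt pos g t v s) = kf pos g t A v (teval A \<rho> s)"
  unfolding kt_def kf_def by (simp add: teval_wt)

lemma K_lemma:
  assumes ca: "cornish_algebra pos A" and fin: "finite (car A)" and g: "\<not> pos g"
    and const: "\<forall>x\<in>dual_carrier A. \<forall>y\<in>dual_carrier A. dual_uterm pos A t x = dual_uterm pos A t y"
    and a: "a \<in> car A"
  shows "kf pos g t A v a = bt A \<or> kf pos g t A v a = tp A"
    "\<And>p. p \<in> dual_carrier A \<Longrightarrow> p (kf pos g t A v a) = dual_uterm pos A v (dual_uterm pos A t p) a"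
proof -
  have B: "bdl A" using ca by (rule ca_bdl)
  define e where "e = evw A (v @ t) a"
  have ec: "e \<in> car A" unfolding e_def using evw_car[OF ca a] .
  have pe: "p e = (dual_uterm pos A v (dual_uterm pos A t p) a \<noteq> par pos (v @ t))"
    if "p \<in> dual_carrier A" for p
    unfolding e_def using ev_dual[OF ca that a] by (simp add: dual_uterm_append)
  have e01: "e = bt A \<or> e = tp A"
  proof (cases "dual_carrier A = {}")
    case True
    then show ?thesis using sep_eq[OF B fin ec cl(1)[OF B]] by blast
  next
    case False
    then obtain p0 where p0: "p0 \<in> dual_carrier A" by blast
    have all: "p e = p0 e" if p: "p \<in> dual_carrier A" for p
    proof -
      have "dual_uterm pos A t p = dual_uterm pos A t p0" using const p p0 by blast
      thus ?thesis using pe[OF p] pe[OF p0] by simp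
    qed
    show ?thesis
    proof (cases "p0 e")
      case True
      have "e = tp A"
        by (rule sep_eq[OF B fin ec cl(2)[OF B]]) (simp add: all True dual_tp)
      thus ?thesis ..
    next
      case False
      have "e = bt A"
        by (rule sep_eq[OF B fin ec cl(1)[OF B]]) (simp add: all False dual_bt)
      thus ?thesis ..
    qed
  qed
  have gneg: "ops A g (bt A) = tp A" "ops A g (tp A) = bt A" using ca_neg[OF ca g] by auto
  show "kf pos g t A v a = bt A \<or> kf pos g t A v a = tp A"
    unfolding kf_def e_def[symmetric] using e01 gneg by auto
  fix p assume p: "p \<in> dual_carrier A"
  have "p (ops A g e) = (\<not> p e)" using e01 gneg dual_bt[OF p] dual_tp[OF p] by auto
  then show "p (kf pos g t A v a) = dual_uterm pos A v (dual_uterm pos A t p) a"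
    unfolding kf_def e_def[symmetric] using pe[OF p] by auto
qed


definition eqt :: "'f \<Rightarrow> ('f, var3) trm \<Rightarrow> ('f, var3) trm \<Rightarrow> ('f, var3) trm" where
  "eqt g k1 k2 = Join (Meet k1 k2) (Meet (Op g k1) (Op g k2))"

definition Et :: "'f \<Rightarrow> ('v \<Rightarrow> ('f, var3) trm \<Rightarrow> ('f, var3) trm) \<Rightarrow> 'v list
    \<Rightarrow> ('f, var3) trm \<Rightarrow> ('f, var3) trm \<Rightarrow> ('f, var3) trm" where
  "Et g k vs x y = foldr (\<lambda>v acc. Meet (eqt g (k v x) (k v y)) acc) vs Top"

definition dterm :: "'f \<Rightarrow> ('v \<Rightarrow> ('f, var3) trm \<Rightarrow> ('f, var3) trm) \<Rightarrow> 'v list \<Rightarrow> ('f, var3) trm" where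
  "dterm g k vs = Join (Meet (Var V0) (Op g (Et g k vs (Var V0) (Var V1))))
                       (Meet (Var V2) (Et g k vs (Var V0) (Var V1)))"

definition medt :: "('f, var3) trm" where
  "medt = Join (Join (Meet (Var V0) (Var V1)) (Meet (Var V1) (Var V2))) (Meet (Var V0) (Var V2))"

lemma teval_car:
  assumes ca: "cornish_algebra pos A" and "\<forall>v. \<rho> v \<in> car A"
  shows "teval A \<rho> s \<in> car A"
  using assms(2) by (induction s) (auto simp: cl[OF ca_bdl[OF ca]] ca_ops[OF ca])

lemma env3_car: "x \<in> car A \<Longrightarrow> y \<in> car A \<Longrightarrow> z \<in> car A \<Longrightarrow> \<forall>v. env3 x y z v \<in> car A"
  unfolding env3_def by (auto split: var3.splits)

lemma env3_simps[simp]: "env3 x y z V0 = x" "env3 x y z V1 = y" "env3 x y z V2 = z"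
  unfolding env3_def by auto

lemma teval_S:
  assumes S: "subalg2 A S" and r: "\<forall>v. (\<rho>1 v, \<rho>2 v) \<in> S"
  shows "(teval A \<rho>1 s, teval A \<rho>2 s) \<in> S"
proof -
  have h: "(bt A, bt A) \<in> S" "(tp A, tp A) \<in> S"
    "\<And>a a' b b'. (a,a') \<in> S \<Longrightarrow> (b,b') \<in> S \<Longrightarrow> (jn A a b, jn A a' b') \<in> S \<and> (mt A a b, mt A a' b') \<in> S"
    "\<And>f a a'. (a,a') \<in> S \<Longrightarrow> (ops A f a, ops A f a') \<in> S"
    using S unfolding subalg2_def by fast+
  show ?thesis using r by (induction s) (auto simp: h)
qed

lemma disc_semi:
  fixes k :: "'v \<Rightarrow> ('f, var3) trm \<Rightarrow> ('f, var3) trm" and kv :: "'v \<Rightarrow> 'a \<Rightarrow> 'a"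
  assumes ca: "cornish_algebra pos A" and fin: "finite (car A)" and g: "\<not> pos g"
    and tk: "\<And>v \<rho> s. teval A \<rho> (k v s) = kv v (teval A \<rho> s)"
    and K1: "\<And>v a. v \<in> set vs \<Longrightarrow> a \<in> car A \<Longrightarrow> kv v a = bt A \<or> kv v a = tp A"
    and K2: "\<And>a b. a \<in> car A \<Longrightarrow> b \<in> car A \<Longrightarrow> a \<noteq> b \<Longrightarrow> (\<exists>v\<in>set vs. kv v a \<noteq> kv v b)"
  shows "is_discriminator_term A (dterm g k vs)" "semi_primal A"
proof -
  have B: "bdl A" using ca by (rule ca_bdl)
  have gneg: "ops A g (bt A) = tp A" "ops A g (tp A) = bt A" using ca_neg[OF ca g] by auto
  note cB = cl[OF B]
  note dd = derived[OF B cB(1)] derived[OF B cB(2)]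
  have Eval: "teval A \<rho> (Et g k ws s1 s2) =
      (if \<forall>v\<in>set ws. kv v (teval A \<rho> s1) = kv v (teval A \<rho> s2) then tp A else bt A)"
    if ws: "set ws \<subseteq> set vs" and c1: "teval A \<rho> s1 \<in> car A" and c2: "teval A \<rho> s2 \<in> car A"
    for \<rho> s1 s2 ws
    using ws
  proof (induction ws)
    case Nil
    then show ?case by (simp add: Et_def)
  next
    case (Cons v ws)
    have v: "v \<in> set vs" using Cons.prems by auto
    have IH: "teval A \<rho> (Et g k ws s1 s2) =
      (if \<forall>v\<in>set ws. kv v (teval A \<rho> s1) = kv v (teval A \<rho> s2) then tp A else bt A)"
      using Cons by auto
    have e: "teval A \<rho> (eqt g (k v s1) (k v s2)) =
       (if kv v (teval A \<rho> s1) = kv v (teval A \<rho> s2) then tp A else bt A)"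
      using K1[OF v c1] K1[OF v c2] unfolding eqt_def by (auto simp: tk gneg dd)
    have "teval A \<rho> (Et g k (v # ws) s1 s2) =
          mt A (teval A \<rho> (eqt g (k v s1) (k v s2))) (teval A \<rho> (Et g k ws s1 s2))"
      by (simp add: Et_def)
    then show ?case using e IH by (auto simp: dd)
  qed
  have Eq: "teval A \<rho> (Et g k vs s1 s2) = (if teval A \<rho> s1 = teval A \<rho> s2 then tp A else bt A)"
    if c1: "teval A \<rho> s1 \<in> car A" and c2: "teval A \<rho> s2 \<in> car A" for \<rho> s1 s2
    using Eval[OF order.refl c1 c2] K2[OF c1 c2] by auto
  show disc: "is_discriminator_term A (dterm g k vs)"
    unfolding is_discriminator_term_def
  proof (intro ballI)
    fix x y z assume x: "x \<in> car A" and y: "y \<in> car A" and z: "z \<in> car A"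
    have E: "teval A (env3 x y z) (Et g k vs (Var V0) (Var V1)) = (if x = y then tp A else bt A)"
      using Eq[of "env3 x y z" "Var V0" "Var V1"] x y by simp
    show "teval A (env3 x y z) (dterm g k vs) = (if x \<noteq> y then x else z)"
      unfolding dterm_def using E x y z by (simp add: gneg derived[OF B] laws(8)[OF B])
  qed
  have dS: "(if a \<noteq> b then a else c, if a' \<noteq> b' then a' else c') \<in> S"
    if S: "subalg2 A S" and h: "(a,a') \<in> S" "(b,b') \<in> S" "(c,c') \<in> S" for S a a' b b' c c'
  proof -
    have sub: "S \<subseteq> car A \<times> car A" using S unfolding subalg2_def by blast
    have "(teval A (env3 a b c) (dterm g k vs), teval A (env3 a' b' c') (dterm g k vs)) \<in> S"
      by (rule teval_S[OF S]) (use h in \<open>auto simp: env3_def split: var3.splits\<close>)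
    moreover have "a \<in> car A" "b \<in> car A" "c \<in> car A" "a' \<in> car A" "b' \<in> car A" "c' \<in> car A"
      using h sub by auto
    ultimately show ?thesis using disc unfolding is_discriminator_term_def by simp
  qed
  have kS: "(kv v a, kv v a') \<in> S" if S: "subalg2 A S" and h: "(a,a') \<in> S" for S v a a'
  proof -
    have "(teval A (env3 a a a) (k v (Var V0)), teval A (env3 a' a' a') (k v (Var V0))) \<in> S"
      by (rule teval_S[OF S]) (use h in \<open>auto simp: env3_def split: var3.splits\<close>)
    thus ?thesis by (simp add: tk)
  qed
  have maj: "is_majority_term A medt"
    unfolding is_majority_term_def medt_def
  proof (intro ballI conjI)
    fix x y assume x: "x \<in> car A" and y: "y \<in> car A"
    note L = laws[OF B] derived[OF B] cl[OF B]
    show "teval A (env3 x x y) (Join (Join (Meet (Var V0) (Var V1)) (Meet (Var V1) (Var V2))) (Meet (Var V0) (Var V2))) = x"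
      using x y by (simp add: L)
    show "teval A (env3 x y x) (Join (Join (Meet (Var V0) (Var V1)) (Meet (Var V1) (Var V2))) (Meet (Var V0) (Var V2))) = x"
      using x y by (simp add: L)
    show "teval A (env3 y x x) (Join (Join (Meet (Var V0) (Var V1)) (Meet (Var V1) (Var V2))) (Meet (Var V0) (Var V2))) = x"
      using x y by (simp add: L)
  qed
  show "semi_primal A" unfolding semi_primal_def
  proof (intro conjI allI impI)
    show "finite (car A)" by (rule fin)
    show "\<exists>m. is_majority_term A m" using maj by blast
  next
    fix S assume S: "subalg2 A S"
    have sub: "S \<subseteq> car A \<times> car A" using S unfolding subalg2_def by blast
    have bb: "(bt A, bt A) \<in> S" "(tp A, tp A) \<in> S" using S unfolding subalg2_def by blast+
    define B1 where "B1 = fst ` S"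
    define B2 where "B2 = snd ` S"
    have h: "\<And>a a' b b'. (a,a') \<in> S \<Longrightarrow> (b,b') \<in> S \<Longrightarrow> (jn A a b, jn A a' b') \<in> S \<and> (mt A a b, mt A a' b') \<in> S"
      "\<And>f a a'. (a,a') \<in> S \<Longrightarrow> (ops A f a, ops A f a') \<in> S"
      using S unfolding subalg2_def by fast+
    have sB1: "subalg A B1" unfolding subalg_def B1_def
    proof (intro conjI ballI allI)
      show "fst ` S \<subseteq> car A" using sub by auto
      show "bt A \<in> fst ` S" "tp A \<in> fst ` S" using bb by force+
    next
      fix a b assume "a \<in> fst ` S" "b \<in> fst ` S"
      then obtain a' b' where "(a,a') \<in> S" "(b,b') \<in> S" by force
      thus "jn A a b \<in> fst ` S" "mt A a b \<in> fst ` S" using h(1) by force+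
    next
      fix f a assume "a \<in> fst ` S"
      then obtain a' where "(a,a') \<in> S" by force
      thus "ops A f a \<in> fst ` S" using h(2) by force
    qed
    have sB2: "subalg A B2" unfolding subalg_def B2_def
    proof (intro conjI ballI allI)
      show "snd ` S \<subseteq> car A" using sub by auto
      show "bt A \<in> snd ` S" "tp A \<in> snd ` S" using bb by force+
    next
      fix a b assume "a \<in> snd ` S" "b \<in> snd ` S"
      then obtain a' b' where "(a',a) \<in> S" "(b',b) \<in> S" by force
      thus "jn A a b \<in> snd ` S" "mt A a b \<in> snd ` S" using h(1) by force+
    next
      fix f a assume "a \<in> snd ` S"
      then obtain a' where "(a',a) \<in> S" by force
      thus "ops A f a \<in> snd ` S" using h(2) by force
    qed
    show "(\<exists>B1 B2. subalg A B1 \<and> subalg A B2 \<and> S = B1 \<times> B2) \<or> (\<exists>B. subalg A B \<and> S = {(b, b) | b. b \<in> B})"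
    proof (cases "\<forall>(u,w)\<in>S. u = w")
      case True
      have "S = {(b, b) | b. b \<in> B1}" using True unfolding B1_def by force
      thus ?thesis using sB1 by blast
    next
      case False
      then obtain u w where uw: "(u,w) \<in> S" "u \<noteq> w" by auto
      have uwc: "u \<in> car A" "w \<in> car A" using uw sub by auto
      obtain v where v: "v \<in> set vs" "kv v u \<noteq> kv v w" using K2[OF uwc uw(2)] by blast
      have kk: "(kv v u, kv v w) \<in> S" using kS[OF S uw(1)] .
      have ne: "bt A \<noteq> tp A" using K1[OF v(1) uwc(1)] K1[OF v(1) uwc(2)] v(2) by auto
      obtain x0 y0 where P: "(x0, bt A) \<in> S" "(x0, tp A) \<in> S" and Q: "(bt A, y0) \<in> S" "(tp A, y0) \<in> S"
        using K1[OF v(1) uwc(1)] K1[OF v(1) uwc(2)] v(2) kk bb by auto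
      have "S = B1 \<times> B2"
      proof
        show "S \<subseteq> B1 \<times> B2" unfolding B1_def B2_def by force
        show "B1 \<times> B2 \<subseteq> S"
        proof (clarify)
          fix a b assume "a \<in> B1" "b \<in> B2"
          then obtain w1 b0 where aw: "(a,w1) \<in> S" and bw: "(b0,b) \<in> S" unfolding B1_def B2_def by force
          have 1: "(a, bt A) \<in> S" using dS[OF S P(1) P(2) aw] ne by simp
          have 2: "(bt A, b) \<in> S" using dS[OF S Q(1) Q(2) bw] ne by simp
          show "(a, b) \<in> S"
          proof (cases "b = bt A")
            case True then show ?thesis using 1 by simp
          next
            case nb: False
            have 3: "(bt A, bt A) \<in> S" by (rule bb(1))
            show ?thesis using dS[OF S 2 3 1] nb by simp
          qed
        qed
      qed
      thus ?thesis using sB1 sB2 by blast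
    qed
  qed
qed


theorem corollary5p12:
  fixes \<B> :: "('a, 'f) cornish set" and pos :: "'f \<Rightarrow> bool"
  assumes "finite \<B>"
    and "\<forall>A\<in>\<B>. cornish_algebra pos A \<and> finite (car A)"
    and "\<forall>A\<in>\<B>. \<forall>S. dual_substructure pos A S \<and> S \<noteq> {} \<longrightarrow> S = dual_carrier A"
    and "\<exists>f. \<not> pos f"
    and "\<exists>t. t \<noteq> [] \<and> (\<forall>A\<in>\<B>. \<forall>x\<in>dual_carrier A. \<forall>y\<in>dual_carrier A.
                dual_uterm pos A t x = dual_uterm pos A t y)"
  shows "(\<forall>A\<in>\<B>. semi_primal A) \<and> (\<exists>d. \<forall>A\<in>\<B>. is_discriminator_term A d)"
proof -
  obtain g where g: "\<not> pos g" using assms(4) by blast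
  obtain t where const: "\<And>A. A \<in> \<B> \<Longrightarrow> \<forall>x\<in>dual_carrier A. \<forall>y\<in>dual_carrier A.
                dual_uterm pos A t x = dual_uterm pos A t y" using assms(5) by blast
  define c where "c A = dual_uterm pos A t (SOME p. p \<in> dual_carrier A)" for A :: "('a,'f) cornish"
  define V where "V = (\<Union>A\<in>\<B>. (\<lambda>q. SOME v. dual_uterm pos A v (c A) = q) ` dual_carrier A)"
  have ca: "cornish_algebra pos A" "finite (car A)" if "A \<in> \<B>" for A using assms(2) that by auto
  have orbit: "\<exists>v. dual_uterm pos A v (c A) = q" if A: "A \<in> \<B>" and q: "q \<in> dual_carrier A" for A q
  proof -
    have p0: "(SOME p. p \<in> dual_carrier A) \<in> dual_carrier A" using q by (metis someI)
    have cD: "c A \<in> dual_carrier A" unfolding c_def by (rule dual_uterm_carrier[OF ca(1)[OF A] p0])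
    define R where "R = range (\<lambda>v. dual_uterm pos A v (c A))"
    have RD: "R \<subseteq> dual_carrier A" unfolding R_def using dual_uterm_carrier[OF ca(1)[OF A] cD] by auto
    have "dual_substructure pos A R" unfolding dual_substructure_def
    proof (intro conjI allI ballI)
      show "R \<subseteq> dual_carrier A" by (rule RD)
      show "closedin (dual_topology A) R"
        by (rule dual_closed[OF finite_subset[OF RD dual_finite[OF ca(2)[OF A]]] RD])
    next
      fix f x assume "x \<in> R"
      then obtain v where "x = dual_uterm pos A v (c A)" unfolding R_def by auto
      hence "dual_op pos A f x = dual_uterm pos A (f # v) (c A)" by (simp add: dual_uterm_Cons)
      thus "dual_op pos A f x \<in> R" unfolding R_def by auto
    qed
    moreover have "R \<noteq> {}" unfolding R_def by auto
    ultimately have "R = dual_carrier A" using assms(3) A by blast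
    hence "q \<in> R" using q by simp
    then obtain v where "q = dual_uterm pos A v (c A)" unfolding R_def by blast
    thus ?thesis by blast
  qed
  have cover: "\<exists>v\<in>V. dual_uterm pos A v (c A) = q" if A: "A \<in> \<B>" and q: "q \<in> dual_carrier A" for A q
  proof -
    have "dual_uterm pos A (SOME v. dual_uterm pos A v (c A) = q) (c A) = q"
      using orbit[OF A q] by (rule someI_ex)
    moreover have "(SOME v. dual_uterm pos A v (c A) = q) \<in> V" unfolding V_def using A q by blast
    ultimately show ?thesis by blast
  qed
  have "finite V" unfolding V_def
    by (intro finite_UN_I assms(1) finite_imageI dual_finite ca(2))
  then obtain vs where vs: "set vs = V" using finite_list by blast
  have main: "is_discriminator_term A (dterm g (kt pos g t) vs) \<and> semi_primal A" if A: "A \<in> \<B>" for A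
  proof -
    note K = K_lemma[OF ca(1)[OF A] ca(2)[OF A] g const[OF A]]
    have K2: "\<exists>v\<in>set vs. kf pos g t A v a \<noteq> kf pos g t A v b"
      if a: "a \<in> car A" and b: "b \<in> car A" and ab: "a \<noteq> b" for a b
    proof -
      obtain q where q: "q \<in> dual_carrier A" "q a \<noteq> q b"
        using sep[OF ca_bdl[OF ca(1)[OF A]] ca(2)[OF A] a b ab] by blast
      obtain v where v: "v \<in> V" "dual_uterm pos A v (c A) = q" using cover[OF A q(1)] by blast
      have p0: "(SOME p. p \<in> dual_carrier A) \<in> dual_carrier A" using q(1) by (metis someI)
      have tq: "dual_uterm pos A t q = c A" unfolding c_def using const[OF A] q(1) p0 by blast
      have "q (kf pos g t A v a) = q a" "q (kf pos g t A v b) = q b"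
        using K(2)[OF a q(1), of v] K(2)[OF b q(1), of v] tq v(2) by auto
      hence "kf pos g t A v a \<noteq> kf pos g t A v b" using q(2) by metis
      thus ?thesis using v(1) vs by blast
    qed
    have K1: "kf pos g t A v a = bt A \<or> kf pos g t A v a = tp A" if "v \<in> set vs" "a \<in> car A" for v a
      using K(1)[OF that(2)] .
    show ?thesis
      using disc_semi[OF ca(1)[OF A] ca(2)[OF A] g teval_kt K1 K2] by blast
  qed
  show ?thesis using main by blast
qed

end
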